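(* For any labeled test set $S_{\mathrm{test}} \subseteq \{\pm1\}^n\times\{\pm1\}$, depth $d \ge 0$, mapping $\mathcal{H}$ from restrictions to hypotheses, and restriction $\rho$, the procedure $\mathrm{FindTree}(S_{\mathrm{test}}, d, \mathcal{H}, \rho)$ returns a depth-$d$ tree $T$ satisfying \[ \mathrm{error}(T \circ_\rho \mathcal{H}, (S_{\mathrm{test}})_\rho) = \min_{T' \text{ a depth-}d\text{ decision tree}} \mathrm{error}(T' \circ_\rho \mathcal{H}, (S_{\mathrm{test}})_\rho), \] where the minimum ranges over depth-$d$ decision trees querying only coordinates $i$ with $\rho_i=\star$.
   Context: A restriction is $\rho\in\{\pm1,\star\}^n$; $x\in\rho$ means $x_i=\rho_i$ or $\rho_i=\star$ for all $i$; $\rho\cap(x_i=b)$ is $\rho$ with coordinate $i$ (previously $\star$) set to $b$; for two restrictions fixing disjoint coordinate sets, $\rho\cap\ell$ fixes both sets of coordinates. For a labeled set $S$, $S_\rho=\{(x,y)\in S:x\in\rho\}$, and $\mathrm{error}(h,S)$ is the fraction of $(x,y)\in S$ with $h(x)\ne y$. A depth-$d$ decision tree is a set of $2^d$ leaf restrictions defined recursively: depth $0$ is the single all-$\star$ restriction; depth $d\ge1$ has a root coordinate $i$ and two depth-$(d-1)$ subtrees not fixing $i$, whose leaves get coordinate $i$ set to $-1$ and $+1$ respectively. For a tree $T$ querying only coordinates free in $\rho$, $T\circ_\rho\mathcal{H}$ maps $x\in\rho$ to $\mathcal{H}(\rho\cap\ell)(x)$, where $\ell$ is the leaf of $T$ with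 $x\in\ell$. Procedure $\mathrm{FindTree}(S_{\mathrm{test}},d,\mathcal{H},\rho)$: if $d=0$ return the one-leaf tree; otherwise for each $i$ with $\rho_i=\star$, recursively compute $T_{+1}\leftarrow\mathrm{FindTree}(S_{\mathrm{test}},d-1,\mathcal{H},\rho\cap(x_i=1))$ and $T_{-1}\leftarrow\mathrm{FindTree}(S_{\mathrm{test}},d-1,\mathcal{H},\rho\cap(x_i=-1))$, let $T^{(i)}$ be the tree with root $x_i$ and subtrees $T_{-1}$, $T_{+1}$, and return the $T^{(i)}$ minimizing $\mathrm{error}(T^{(i)}\circ_\rho\mathcal{H},(S_{\mathrm{test}})_\rho)$. *)

theory Defs
  imports Complex_Main
begin

text \<open>Points of {+-1}^n are int lists of length n; restrictions are lists of
  int option of length n, None standing for the free symbol (star).\<close>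

type_synonym point = "int list"
type_synonym restr = "int option list"
type_synonym hyp = "point \<Rightarrow> int"

definition pm1 :: "int \<Rightarrow> bool" where
  "pm1 b \<longleftrightarrow> b = 1 \<or> b = -1"

definition is_point :: "nat \<Rightarrow> point \<Rightarrow> bool" where
  "is_point n x \<longleftrightarrow> length x = n \<and> (\<forall>i<n. pm1 (x ! i))"

definition is_restr :: "nat \<Rightarrow> restr \<Rightarrow> bool" where
  "is_restr n \<rho> \<longleftrightarrow> length \<rho> = n \<and> (\<forall>i<n. \<rho> ! i = None \<or> (\<exists>b. pm1 b \<and> \<rho> ! i = Some b))"

definition in_restr :: "point \<Rightarrow> restr \<Rightarrow> bool" where
  "in_restr x \<rho> \<longleftrightarrow> length x = length \<rho> \<and>
     (\<forall>i<length \<rho>. \<rho> ! i = None \<or> \<rho> ! i = Some (x ! i))"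

text \<open>Intersection of two restrictions fixing disjoint coordinate sets.\<close>
definition restr_inter :: "restr \<Rightarrow> restr \<Rightarrow> restr" where
  "restr_inter \<rho> l = map2 (\<lambda>a b. case a of None \<Rightarrow> b | Some v \<Rightarrow> Some v) \<rho> l"

definition restrict_set :: "(point \<times> int) set \<Rightarrow> restr \<Rightarrow> (point \<times> int) set" where
  "restrict_set S \<rho> = {p \<in> S. in_restr (fst p) \<rho>}"

definition error :: "hyp \<Rightarrow> (point \<times> int) set \<Rightarrow> real" where
  "error h S = real (card {p \<in> S. h (fst p) \<noteq> snd p}) / real (card S)"

text \<open>Tree with root x_i and subtrees T0 (for x_i = -1) and T1 (for x_i = +1),
  as a set of leaf restrictions.\<close>
definition node :: "nat \<Rightarrow> restr set \<Rightarrow> restr set \<Rightarrow> restr set" where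
  "node i T0 T1 = (\<lambda>l. l[i := Some (-1)]) ` T0 \<union> (\<lambda>l. l[i := Some 1]) ` T1"

definition fixes_coord :: "restr set \<Rightarrow> nat \<Rightarrow> bool" where
  "fixes_coord T i \<longleftrightarrow> (\<exists>l\<in>T. l ! i \<noteq> None)"

inductive dtree :: "nat \<Rightarrow> nat \<Rightarrow> restr set \<Rightarrow> bool" for n where
  leaf: "dtree n 0 {replicate n None}"
| inner: "\<lbrakk> i < n; dtree n d T0; dtree n d T1; \<not> fixes_coord T0 i; \<not> fixes_coord T1 i \<rbrakk>
          \<Longrightarrow> dtree n (Suc d) (node i T0 T1)"

definition queries_only_free :: "restr set \<Rightarrow> restr \<Rightarrow> bool" where
  "queries_only_free T \<rho> \<longleftrightarrow> (\<forall>l\<in>T. \<forall>i<length \<rho>. l ! i \<noteq> None \<longrightarrow> \<rho> ! i = None)"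

definition compose :: "restr set \<Rightarrow> restr \<Rightarrow> (restr \<Rightarrow> hyp) \<Rightarrow> hyp" where
  "compose T \<rho> H x = H (restr_inter \<rho> (SOME l. l \<in> T \<and> in_restr x l)) x"

text \<open>FindTree as a relation: findtree S d H \<rho> T means T is a possible return value of
  FindTree(S, d, H, \<rho>) (ties in the argmin may be broken arbitrarily).\<close>
inductive findtree :: "(point \<times> int) set \<Rightarrow> nat \<Rightarrow> (restr \<Rightarrow> hyp) \<Rightarrow> restr \<Rightarrow> restr set \<Rightarrow> bool"
  where
  zero: "findtree S 0 H \<rho> {replicate (length \<rho>) None}"
| suc: "\<lbrakk> \<forall>i<length \<rho>. \<rho> ! i = None \<longrightarrow>
            findtree S d H (\<rho>[i := Some 1]) (Tp i) \<and> findtree S d H (\<rho>[i := Some (-1)]) (Tm i);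
          i0 < length \<rho>; \<rho> ! i0 = None;
          \<forall>i<length \<rho>. \<rho> ! i = None \<longrightarrow>
            error (compose (node i0 (Tm i0) (Tp i0)) \<rho> H) (restrict_set S \<rho>)
            \<le> error (compose (node i (Tm i) (Tp i)) \<rho> H) (restrict_set S \<rho>) \<rbrakk>
        \<Longrightarrow> findtree S (Suc d) H \<rho> (node i0 (Tm i0) (Tp i0))"

end

theory Submission
  imports Defs
begin

lemma dtree_len: "dtree n d T \<Longrightarrow> l \<in> T \<Longrightarrow> length l = n"
  by (induction arbitrary: l rule: dtree.induct) (auto simp: node_def)

lemma dtree_ne: "dtree n d T \<Longrightarrow> T \<noteq> {}"
  by (induction rule: dtree.induct) (auto simp: node_def)

lemma in_restr_upd:
  assumes "a ! i = None" "i < length a"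
  shows "in_restr x (a[i := Some v]) \<longleftrightarrow> in_restr x a \<and> x ! i = v"
  using assms unfolding in_restr_def
  by (auto simp: nth_list_update)

lemma nofix: "\<not> fixes_coord T i \<Longrightarrow> l \<in> T \<Longrightarrow> l ! i = None"
  by (auto simp: fixes_coord_def)

lemma dtree_cover: "dtree n d T \<Longrightarrow> is_point n x \<Longrightarrow> \<exists>l\<in>T. in_restr x l"
proof (induction rule: dtree.induct)
  case leaf
  then show ?case by (auto simp: in_restr_def is_point_def)
next
  case (inner i d T0 T1)
  have "x ! i = 1 \<or> x ! i = -1" using inner.prems inner.hyps(1) by (auto simp: is_point_def pm1_def)
  then show ?case
  proof
    assume h: "x ! i = 1"
    obtain l where l: "l \<in> T1" "in_restr x l" using inner by auto
    have "length l = n" using inner.hyps(3) l(1) dtree_len by blast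
    then have "in_restr x (l[i := Some 1])"
      using in_restr_upd[of l i x 1] nofix[OF inner.hyps(5) l(1)] inner.hyps(1) l h by auto
    then show ?thesis using l by (auto simp: node_def)
  next
    assume h: "x ! i = -1"
    obtain l where l: "l \<in> T0" "in_restr x l" using inner by auto
    have "length l = n" using inner.hyps(2) l(1) dtree_len by blast
    then have "in_restr x (l[i := Some (-1)])"
      using in_restr_upd[of l i x "-1"] nofix[OF inner.hyps(4) l(1)] inner.hyps(1) l h by auto
    then show ?thesis using l by (auto simp: node_def)
  qed
qed

lemma dtree_unique: "dtree n d T \<Longrightarrow> l1 \<in> T \<Longrightarrow> l2 \<in> T \<Longrightarrow> in_restr x l1 \<Longrightarrow> in_restr x l2 \<Longrightarrow> l1 = l2"
proof (induction arbitrary: l1 l2 rule: dtree.induct)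
  case leaf
  then show ?case by auto
next
  case (inner i d T0 T1)
  have A: "in_restr x (a[i := Some v]) \<longleftrightarrow> in_restr x a \<and> x ! i = v" if "a \<in> T0 \<union> T1" for a v
  proof -
    have "length a = n" using that inner.hyps(2,3) dtree_len by blast
    moreover have "a ! i = None" using that nofix inner.hyps(4,5) by blast
    ultimately show ?thesis using in_restr_upd inner.hyps(1) by auto
  qed
  from inner.prems(1,2) consider
     (a) a b where "a \<in> T0" "b \<in> T0" "l1 = a[i := Some (-1)]" "l2 = b[i := Some (-1)]"
   | (b) a b where "a \<in> T0" "b \<in> T1" "l1 = a[i := Some (-1)]" "l2 = b[i := Some 1]"
   | (c) a b where "a \<in> T1" "b \<in> T0" "l1 = a[i := Some 1]" "l2 = b[i := Some (-1)]"
   | (d) a b where "a \<in> T1" "b \<in> T1" "l1 = a[i := Some 1]" "l2 = b[i := Some 1]"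
    unfolding node_def by blast
  then show ?case
  proof cases
    case a then show ?thesis using A inner.prems inner.IH(1)[of a b] by auto
  next
    case b then show ?thesis using A[of a "-1"] A[of b 1] inner.prems by auto
  next
    case c then show ?thesis using A[of a 1] A[of b "-1"] inner.prems by auto
  next
    case d then show ?thesis using A inner.prems inner.IH(2)[of a b] by auto
  qed
qed

lemma some_unique: "a \<in> T \<Longrightarrow> P a \<Longrightarrow> (\<And>b. b \<in> T \<Longrightarrow> P b \<Longrightarrow> b = a) \<Longrightarrow> (SOME l. l \<in> T \<and> P l) = a"
  by (rule some_equality) blast+

lemma restr_inter_len: "length l = length \<rho> \<Longrightarrow> length (restr_inter \<rho> l) = length \<rho>"
  by (simp add: restr_inter_def)

lemma restr_inter_nth: "length l = length \<rho> \<Longrightarrow> j < length \<rho> \<Longrightarrow>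
  restr_inter \<rho> l ! j = (case \<rho> ! j of None \<Rightarrow> l ! j | Some v \<Rightarrow> Some v)"
  by (simp add: restr_inter_def)

lemma restr_inter_upd:
  assumes "\<rho> ! i = None" "length l = length \<rho>" "l ! i = None" "i < length \<rho>"
  shows "restr_inter \<rho> (l[i := Some w]) = restr_inter (\<rho>[i := Some w]) l"
proof (rule nth_equalityI)
  show "length (restr_inter \<rho> (l[i := Some w])) = length (restr_inter (\<rho>[i := Some w]) l)"
    using assms by (simp add: restr_inter_len)
  fix j assume "j < length (restr_inter \<rho> (l[i := Some w]))"
  then have j: "j < length \<rho>" using assms by (simp add: restr_inter_len)
  show "restr_inter \<rho> (l[i := Some w]) ! j = restr_inter (\<rho>[i := Some w]) l ! j"
    using j assms by (cases "j = i"; cases "\<rho> ! j") (simp_all add: restr_inter_nth)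
qed

lemma compose_node:
  assumes "dtree n d T0" "dtree n d T1" "\<not> fixes_coord T0 i" "\<not> fixes_coord T1 i" "i < n"
    "length \<rho> = n" "\<rho> ! i = None" "is_point n x"
  shows "x ! i = -1 \<Longrightarrow> compose (node i T0 T1) \<rho> H x = compose T0 (\<rho>[i := Some (-1)]) H x"
    and "x ! i = 1 \<Longrightarrow> compose (node i T0 T1) \<rho> H x = compose T1 (\<rho>[i := Some 1]) H x"
proof -
  have D: "dtree n (Suc d) (node i T0 T1)" using assms by (intro dtree.inner)
  show "x ! i = -1 \<Longrightarrow> compose (node i T0 T1) \<rho> H x = compose T0 (\<rho>[i := Some (-1)]) H x"
  proof -
    assume h: "x ! i = -1"
    obtain l where l: "l \<in> T0" "in_restr x l" using dtree_cover assms by blast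
    have len: "length l = n" using l assms dtree_len by blast
    have li: "l ! i = None" using nofix assms l by blast
    have m: "l[i := Some (-1)] \<in> node i T0 T1" using l by (auto simp: node_def)
    have m2: "in_restr x (l[i := Some (-1)])" using in_restr_upd[of l i x "-1"] len li l h assms by auto
    have s1: "(SOME l. l \<in> node i T0 T1 \<and> in_restr x l) = l[i := Some (-1)]"
      using some_unique[of _ _ "in_restr x", OF m m2] dtree_unique[OF D _ m _ m2] by blast
    have s2: "(SOME l'. l' \<in> T0 \<and> in_restr x l') = l"
      using some_unique[of _ _ "in_restr x", OF l] dtree_unique[OF assms(1) _ l(1) _ l(2)] by blast
    show ?thesis unfolding compose_def s1 s2 using restr_inter_upd assms len li by auto
  qed
  show "x ! i = 1 \<Longrightarrow> compose (node i T0 T1) \<rho> H x = compose T1 (\<rho>[i := Some 1]) H x"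
  proof -
    assume h: "x ! i = 1"
    obtain l where l: "l \<in> T1" "in_restr x l" using dtree_cover assms by blast
    have len: "length l = n" using l assms dtree_len by blast
    have li: "l ! i = None" using nofix assms l by blast
    have m: "l[i := Some 1] \<in> node i T0 T1" using l by (auto simp: node_def)
    have m2: "in_restr x (l[i := Some 1])" using in_restr_upd[of l i x 1] len li l h assms by auto
    have s1: "(SOME l. l \<in> node i T0 T1 \<and> in_restr x l) = l[i := Some 1]"
      using some_unique[of _ _ "in_restr x", OF m m2] dtree_unique[OF D _ m _ m2] by blast
    have s2: "(SOME l'. l' \<in> T1 \<and> in_restr x l') = l"
      using some_unique[of _ _ "in_restr x", OF l] dtree_unique[OF assms(2) _ l(1) _ l(2)] by blast
    show ?thesis unfolding compose_def s1 s2 using restr_inter_upd assms len li by auto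
  qed
qed

definition cnt :: "(point \<times> int) set \<Rightarrow> (restr \<Rightarrow> hyp) \<Rightarrow> restr set \<Rightarrow> restr \<Rightarrow> nat" where
  "cnt S H T \<rho> = card {p \<in> restrict_set S \<rho>. compose T \<rho> H (fst p) \<noteq> snd p}"

lemma restrict_upd:
  assumes "\<rho> ! i = None" "i < length \<rho>"
  shows "restrict_set S (\<rho>[i := Some v]) = {p \<in> restrict_set S \<rho>. fst p ! i = v}"
  using in_restr_upd[OF assms] by (auto simp: restrict_set_def)

lemma cnt_node:
  assumes "finite S" "\<forall>p\<in>S. is_point n (fst p)"
    "dtree n d T0" "dtree n d T1" "\<not> fixes_coord T0 i" "\<not> fixes_coord T1 i" "i < n"
    "length \<rho> = n" "\<rho> ! i = None"
  shows "cnt S H (node i T0 T1) \<rho> = cnt S H T0 (\<rho>[i := Some (-1)]) + cnt S H T1 (\<rho>[i := Some 1])"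
proof -
  let ?A = "{p \<in> restrict_set S \<rho>. compose (node i T0 T1) \<rho> H (fst p) \<noteq> snd p}"
  let ?B = "{p \<in> restrict_set S (\<rho>[i := Some (-1)]). compose T0 (\<rho>[i := Some (-1)]) H (fst p) \<noteq> snd p}"
  let ?C = "{p \<in> restrict_set S (\<rho>[i := Some 1]). compose T1 (\<rho>[i := Some 1]) H (fst p) \<noteq> snd p}"
  have pt: "p \<in> restrict_set S \<rho> \<Longrightarrow> is_point n (fst p)" for p using assms(2) by (auto simp: restrict_set_def)
  have pm: "p \<in> restrict_set S \<rho> \<Longrightarrow> fst p ! i = 1 \<or> fst p ! i = -1" for p
    using pt[of p] assms(7) by (auto simp: is_point_def pm1_def)
  have "?A = ?B \<union> ?C"
  proof (rule set_eqI)
    fix p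
    show "p \<in> ?A \<longleftrightarrow> p \<in> ?B \<union> ?C"
      using pm[of p] pt[of p] compose_node[OF assms(3-8) assms(9), of "fst p" H]
        restrict_upd[OF assms(9), of S] assms(7,8) by auto
  qed
  moreover have "?B \<inter> ?C = {}" using restrict_upd[OF assms(9), of S] assms(7,8) by auto
  moreover have "finite ?B" "finite ?C" using assms(1) by (auto simp: restrict_set_def)
  ultimately show ?thesis unfolding cnt_def by (simp add: card_Un_disjoint)
qed

lemma error_cnt: "error (compose T \<rho> H) (restrict_set S \<rho>) = real (cnt S H T \<rho>) / real (card (restrict_set S \<rho>))"
  by (simp add: error_def cnt_def)

lemma cnt_le_from_error:
  assumes "finite S" "error (compose T \<rho> H) (restrict_set S \<rho>) \<le> error (compose T' \<rho> H) (restrict_set S \<rho>)"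
  shows "cnt S H T \<rho> \<le> cnt S H T' \<rho>"
proof (cases "card (restrict_set S \<rho>) = 0")
  case True
  have "finite (restrict_set S \<rho>)" using assms(1) by (simp add: restrict_set_def)
  then have "restrict_set S \<rho> = {}" using True by simp
  then show ?thesis by (simp add: cnt_def)
next
  case False
  then show ?thesis using assms(2) unfolding error_cnt by (simp add: divide_le_cancel)
qed

lemma qof_sub:
  assumes "queries_only_free (node i T0 T1) \<rho>" "\<rho> ! i = None" "i < length \<rho>"
    "\<not> fixes_coord T0 i" "\<not> fixes_coord T1 i"
  shows "queries_only_free T0 (\<rho>[i := Some (-1)])" "queries_only_free T1 (\<rho>[i := Some 1])"
proof -
  show "queries_only_free T0 (\<rho>[i := Some (-1)])"
    unfolding queries_only_free_def
  proof (intro ballI allI impI)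
    fix l j assume l: "l \<in> T0" and j: "j < length (\<rho>[i := Some (-1)])" "l ! j \<noteq> None"
    have "l ! i = None" using nofix assms(4) l by blast
    then have "j \<noteq> i" using j by auto
    moreover have "l[i := Some (-1)] \<in> node i T0 T1" using l by (auto simp: node_def)
    ultimately show "\<rho>[i := Some (-1)] ! j = None" using assms(1) j
      unfolding queries_only_free_def by (metis length_list_update nth_list_update_neq)
  qed
  show "queries_only_free T1 (\<rho>[i := Some 1])"
    unfolding queries_only_free_def
  proof (intro ballI allI impI)
    fix l j assume l: "l \<in> T1" and j: "j < length (\<rho>[i := Some 1])" "l ! j \<noteq> None"
    have "l ! i = None" using nofix assms(5) l by blast
    then have "j \<noteq> i" using j by auto
    moreover have "l[i := Some 1] \<in> node i T0 T1" using l by (auto simp: node_def)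
    ultimately show "\<rho>[i := Some 1] ! j = None" using assms(1) j
      unfolding queries_only_free_def by (metis length_list_update nth_list_update_neq)
  qed
qed

lemma qof_node:
  assumes "queries_only_free T0 (\<rho>[i := Some (-1)])" "queries_only_free T1 (\<rho>[i := Some 1])"
    "\<rho> ! i = None"
  shows "queries_only_free (node i T0 T1) \<rho>"
  unfolding queries_only_free_def
proof (intro ballI allI impI)
  fix l j assume l: "l \<in> node i T0 T1" and j: "j < length \<rho>" "l ! j \<noteq> None"
  show "\<rho> ! j = None"
  proof (cases "j = i")
    case True then show ?thesis using assms(3) by simp
  next
    case False
    from l obtain a v T where a: "a \<in> T" "l = a[i := Some v]" "queries_only_free T (\<rho>[i := Some v])"
      using assms(1,2) unfolding node_def by blast
    have "a ! j \<noteq> None" using j a False by simp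
    then have "\<rho>[i := Some v] ! j = None" using a(1,3) j unfolding queries_only_free_def by simp
    then show ?thesis using False by simp
  qed
qed

lemma qof_nofix:
  assumes "queries_only_free T (\<rho>[i := Some v])" "i < length \<rho>"
  shows "\<not> fixes_coord T i"
proof
  assume "fixes_coord T i"
  then obtain l where "l \<in> T" "l ! i \<noteq> None" by (auto simp: fixes_coord_def)
  moreover have "\<forall>j<length (\<rho>[i := Some v]). l ! j \<noteq> None \<longrightarrow> \<rho>[i := Some v] ! j = None"
    using assms(1) \<open>l \<in> T\<close> unfolding queries_only_free_def by blast
  ultimately have "\<rho>[i := Some v] ! i = None" using assms(2) by (metis length_list_update)
  then show False using assms(2) by simp
qed

lemma is_restr_upd:
  assumes "is_restr n \<rho>" "pm1 v"
  shows "is_restr n (\<rho>[i := Some v])"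
proof -
  have "\<rho>[i := Some v] ! j = None \<or> (\<exists>b. pm1 b \<and> \<rho>[i := Some v] ! j = Some b)" if "j < n" for j
    using assms that unfolding is_restr_def by (cases "j = i") auto
  then show ?thesis using assms unfolding is_restr_def by simp
qed

lemma main:
  assumes "findtree S d H \<rho> T" "finite S" "\<forall>p\<in>S. is_point n (fst p)" "is_restr n \<rho>"
  shows "dtree n d T \<and> queries_only_free T \<rho> \<and>
    (\<forall>T'. dtree n d T' \<and> queries_only_free T' \<rho> \<longrightarrow> cnt S H T \<rho> \<le> cnt S H T' \<rho>)"
  using assms
proof (induction arbitrary: rule: findtree.induct)
  case (zero S H \<rho>)
  have len: "length \<rho> = n" using zero.prems by (simp add: is_restr_def)
  have "dtree n 0 T' \<Longrightarrow> T' = {replicate n None}" for T' by (auto elim: dtree.cases)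
  then show ?case using len by (auto intro: dtree.leaf simp: queries_only_free_def)
next
  case (suc \<rho> S d H Tp Tm i0)
  have len: "length \<rho> = n" using suc.prems by (simp add: is_restr_def)
  have pm: "pm1 1" "pm1 (-1)" by (auto simp: pm1_def)
  have IH: "dtree n d (Tp i) \<and> queries_only_free (Tp i) (\<rho>[i := Some 1]) \<and>
      (\<forall>T'. dtree n d T' \<and> queries_only_free T' (\<rho>[i := Some 1]) \<longrightarrow>
        cnt S H (Tp i) (\<rho>[i := Some 1]) \<le> cnt S H T' (\<rho>[i := Some 1]))"
    "dtree n d (Tm i) \<and> queries_only_free (Tm i) (\<rho>[i := Some (-1)]) \<and>
      (\<forall>T'. dtree n d T' \<and> queries_only_free T' (\<rho>[i := Some (-1)]) \<longrightarrow>
        cnt S H (Tm i) (\<rho>[i := Some (-1)]) \<le> cnt S H T' (\<rho>[i := Some (-1)]))"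
    if "i < length \<rho>" "\<rho> ! i = None" for i
    using suc.IH(1) that suc.prems is_restr_upd pm by blast+
  have nf: "\<not> fixes_coord (Tm i) i" "\<not> fixes_coord (Tp i) i"
    if "i < length \<rho>" "\<rho> ! i = None" for i
    using IH[OF that] qof_nofix that by blast+
  have cn: "cnt S H (node i (Tm i) (Tp i)) \<rho> = cnt S H (Tm i) (\<rho>[i := Some (-1)]) + cnt S H (Tp i) (\<rho>[i := Some 1])"
    if "i < length \<rho>" "\<rho> ! i = None" for i
    using cnt_node[OF suc.prems(1,2) _ _ nf[OF that] _ len that(2)] IH[OF that] that len by blast
  have best: "cnt S H (node i0 (Tm i0) (Tp i0)) \<rho> \<le> cnt S H (node i (Tm i) (Tp i)) \<rho>"
    if "i < length \<rho>" "\<rho> ! i = None" for i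
    using cnt_le_from_error[OF suc.prems(1)] suc.hyps(3) that by blast
  show ?case
  proof (intro conjI allI impI)
    show "dtree n (Suc d) (node i0 (Tm i0) (Tp i0))"
      using IH[OF suc.hyps(1,2)] nf[OF suc.hyps(1,2)] suc.hyps(1) len by (auto intro: dtree.inner)
    show "queries_only_free (node i0 (Tm i0) (Tp i0)) \<rho>"
      using IH[OF suc.hyps(1,2)] qof_node suc.hyps(2) by blast
    fix T' assume T': "dtree n (Suc d) T' \<and> queries_only_free T' \<rho>"
    then obtain i T0 T1 where t: "T' = node i T0 T1" "i < n" "dtree n d T0" "dtree n d T1"
      "\<not> fixes_coord T0 i" "\<not> fixes_coord T1 i"
      by (auto elim: dtree.cases)
    obtain l where l: "l \<in> T0" using dtree_ne[OF t(3)] by blast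
    have "l[i := Some (-1)] \<in> T'" using t l by (auto simp: node_def)
    moreover have "length l = n" using dtree_len t(3) l by blast
    ultimately have ri: "\<rho> ! i = None" using T' t(2) len unfolding queries_only_free_def by fastforce
    have il: "i < length \<rho>" using t(2) len by simp
    have q: "queries_only_free T0 (\<rho>[i := Some (-1)])" "queries_only_free T1 (\<rho>[i := Some 1])"
      using qof_sub[of i T0 T1 \<rho>] T' t ri il by auto
    have "cnt S H T' \<rho> = cnt S H T0 (\<rho>[i := Some (-1)]) + cnt S H T1 (\<rho>[i := Some 1])"
      using cnt_node[OF suc.prems(1,2) t(3,4,5,6,2) len ri] t(1) by simp
    also have "\<dots> \<ge> cnt S H (node i (Tm i) (Tp i)) \<rho>"
      using cn[OF il ri] IH[OF il ri] q t by (simp add: add_mono)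
    finally show "cnt S H (node i0 (Tm i0) (Tp i0)) \<rho> \<le> cnt S H T' \<rho>"
      using best[OF il ri] by linarith
  qed
qed

theorem claim6p5:
  fixes n d :: nat and S :: "(point \<times> int) set" and H :: "restr \<Rightarrow> hyp"
    and \<rho> :: restr and T :: "restr set"
  assumes "finite S"
    and "\<forall>p\<in>S. is_point n (fst p) \<and> pm1 (snd p)"
    and "is_restr n \<rho>"
    and "findtree S d H \<rho> T"
  shows "dtree n d T \<and> queries_only_free T \<rho> \<and>
    (\<forall>T'. dtree n d T' \<and> queries_only_free T' \<rho> \<longrightarrow>
       error (compose T \<rho> H) (restrict_set S \<rho>) \<le> error (compose T' \<rho> H) (restrict_set S \<rho>))"
proof -
  have m: "dtree n d T \<and> queries_only_free T \<rho> \<and>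
    (\<forall>T'. dtree n d T' \<and> queries_only_free T' \<rho> \<longrightarrow> cnt S H T \<rho> \<le> cnt S H T' \<rho>)"
    using main[OF assms(4,1) _ assms(3)] assms(2) by blast
  show ?thesis unfolding error_cnt using m by (auto intro: divide_right_mono)
qed

end
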